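(* Let $\mathbb{F}$ be a clone on a set $A$ and let $\mathbb{S}\subseteq\mathbb{F}^{(1)}$ be a transformation semigroup (closed under composition). If $\operatorname{cf}(\mathbb{S})>\aleph_0$ and $\operatorname{rank}(\mathbb{F}:\mathbb{S})$ is finite, then $\operatorname{cf}(\mathbb{F})>\aleph_0$.
   Context: A clone on $A$ is a set of finitary operations on $A$ containing all projections and closed under composition $f\circ\langle g_1,\dots,g_n\rangle(\bar x)=f(g_1(\bar x),\dots,g_n(\bar x))$; $\mathbb{F}^{(n)}$ denotes the $n$-ary members of $\mathbb{F}$; $\langle M\rangle_{O_A}$ is the clone generated by $M$. $\operatorname{rank}(\mathbb{F}:M)$ is the least cardinality of $N\subseteq\mathbb{F}$ with $\langle M\cup N\rangle_{O_A}=\mathbb{F}$. The cofinality $\operatorname{cf}$ of a non-finitely generated algebraic structure (clone, semigroup) is the least cardinal $\lambda$ such that it is the union of an increasing chain $(\mathbb{A}_i)_{i<\lambda}$ of proper substructures (subclones, resp. subsemigroups). *)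

theory Defs
  imports Main
begin

text \<open>Finitary operations on the base set A, taken to be the universe of the type 'a.
  An n-ary operation is a pair (n, f) with f :: 'a list => 'a, normalised so that
  f xs = undefined whenever length xs is not n (so that equal operations are equal terms).\<close>

type_synonym 'a operation = "nat \<times> ('a list \<Rightarrow> 'a)"

definition ops :: "'a operation set" where
  "ops = {(n, f). \<forall>xs. length xs \<noteq> n \<longrightarrow> f xs = undefined}"

definition proj :: "nat \<Rightarrow> nat \<Rightarrow> 'a operation" where
  "proj n i = (n, \<lambda>xs. if length xs = n then xs ! i else undefined)"

definition ocomp :: "'a operation \<Rightarrow> 'a operation list \<Rightarrow> nat \<Rightarrow> 'a operation" where
  "ocomp f gs n = (n, \<lambda>xs. if length xs = n then snd f (map (\<lambda>g. snd g xs) gs) else undefined)"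

definition is_clone :: "'a operation set \<Rightarrow> bool" where
  "is_clone C \<longleftrightarrow> C \<subseteq> ops
     \<and> (\<forall>n i. i < n \<longrightarrow> proj n i \<in> C)
     \<and> (\<forall>f gs n. f \<in> C \<longrightarrow> length gs = fst f \<longrightarrow> set gs \<subseteq> C
            \<longrightarrow> (\<forall>g\<in>set gs. fst g = n) \<longrightarrow> ocomp f gs n \<in> C)"

definition clone_gen :: "'a operation set \<Rightarrow> 'a operation set" where
  "clone_gen M = \<Inter>{C. is_clone C \<and> M \<subseteq> C}"

definition arity_part :: "'a operation set \<Rightarrow> nat \<Rightarrow> 'a operation set" where
  "arity_part F n = {f \<in> F. fst f = n}"

definition comp_closed :: "'a operation set \<Rightarrow> bool" where
  "comp_closed T \<longleftrightarrow> (\<forall>f\<in>T. \<forall>g\<in>T. ocomp f [g] 1 \<in> T)"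

definition transformation_semigroup_in :: "'a operation set \<Rightarrow> 'a operation set \<Rightarrow> bool" where
  "transformation_semigroup_in S F \<longleftrightarrow> S \<subseteq> arity_part F 1 \<and> comp_closed S"

definition finite_rank :: "'a operation set \<Rightarrow> 'a operation set \<Rightarrow> bool" where
  "finite_rank F M \<longleftrightarrow> (\<exists>N. finite N \<and> N \<subseteq> F \<and> clone_gen (M \<union> N) = F)"

text \<open>cf > aleph_0: the structure is not the union of an increasing countable (omega-indexed)
  chain of proper substructures.\<close>
definition clone_cf_uncountable :: "'a operation set \<Rightarrow> bool" where
  "clone_cf_uncountable F \<longleftrightarrow>
     \<not> (\<exists>C :: nat \<Rightarrow> 'a operation set.
          (\<forall>k. C k \<subseteq> C (Suc k)) \<and> (\<forall>k. is_clone (C k) \<and> C k \<subset> F) \<and> (\<Union>k. C k) = F)"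

definition semigroup_cf_uncountable :: "'a operation set \<Rightarrow> bool" where
  "semigroup_cf_uncountable S \<longleftrightarrow>
     \<not> (\<exists>C :: nat \<Rightarrow> 'a operation set.
          (\<forall>k. C k \<subseteq> C (Suc k)) \<and> (\<forall>k. comp_closed (C k) \<and> C k \<subset> S) \<and> (\<Union>k. C k) = S)"

end

theory Submission
  imports Defs
begin

lemma fin_in_chain:
  assumes mono: "\<And>k. C k \<subseteq> C (Suc k)" and fin: "finite N" and sub: "N \<subseteq> (\<Union>k. C k)"
  shows "\<exists>k. N \<subseteq> C k"
  using fin sub
proof (induction N rule: finite_induct)
  case empty then show ?case by auto
next
  case (insert x N)
  then obtain k where k: "N \<subseteq> C k" by auto
  from insert obtain j where j: "x \<in> C j" by auto
  have m: "\<And>a b. a \<le> b \<Longrightarrow> C a \<subseteq> C b" using lift_Suc_mono_le[of C] mono by blast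
  have "insert x N \<subseteq> C (max k j)" using k j m[of k "max k j"] m[of j "max k j"] by auto
  then show ?case by blast
qed

theorem proposition6p1:
  fixes F S :: "'a operation set"
  assumes "is_clone F"
    and "transformation_semigroup_in S F"
    and "semigroup_cf_uncountable S"
    and "finite_rank F S"
  shows "clone_cf_uncountable F"
proof (unfold clone_cf_uncountable_def, rule notI)
  assume "\<exists>C :: nat \<Rightarrow> 'a operation set.
          (\<forall>k. C k \<subseteq> C (Suc k)) \<and> (\<forall>k. is_clone (C k) \<and> C k \<subset> F) \<and> (\<Union>k. C k) = F"
  then obtain C :: "nat \<Rightarrow> 'a operation set" where
    H: "(\<forall>k. C k \<subseteq> C (Suc k)) \<and> (\<forall>k. is_clone (C k) \<and> C k \<subset> F) \<and> (\<Union>k. C k) = F"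
    by (rule exE)
  have mono: "\<And>k. C k \<subseteq> C (Suc k)" using H by simp
  have cl: "\<And>k. is_clone (C k)" using H by simp
  have pr: "\<And>k. C k \<subset> F" using H by simp
  have un: "(\<Union>k. C k) = F" using H by simp
  from assms(4) obtain N where N: "finite N" "N \<subseteq> F" "clone_gen (S \<union> N) = F"
    unfolding finite_rank_def by blast
  obtain k where k: "N \<subseteq> C k" using fin_in_chain[of C, OF mono N(1)] N(2) un by blast
  have SF: "S \<subseteq> arity_part F 1" and Scc: "comp_closed S"
    using assms(2) unfolding transformation_semigroup_in_def by auto
  have m: "\<And>a b. a \<le> b \<Longrightarrow> C a \<subseteq> C b" using lift_Suc_mono_le[of C] mono by blast
  define D where "D j = C (k + j) \<inter> S" for j
  have "\<exists>j. S \<subseteq> C (k + j)"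
  proof (rule ccontr)
    assume nS: "\<not> (\<exists>j. S \<subseteq> C (k + j))"
    have "(\<forall>j. D j \<subseteq> D (Suc j)) \<and> (\<forall>j. comp_closed (D j) \<and> D j \<subset> S) \<and> (\<Union>j. D j) = S"
    proof (intro conjI allI)
      fix j show "D j \<subseteq> D (Suc j)" unfolding D_def using mono[of "k+j"] by auto
    next
      fix j
      show "comp_closed (D j)" unfolding comp_closed_def D_def
      proof (intro ballI)
        fix f g assume f: "f \<in> C (k + j) \<inter> S" and g: "g \<in> C (k + j) \<inter> S"
        have "fst f = 1" "fst g = 1" using f g SF unfolding arity_part_def by auto
        have c3: "\<forall>f gs n. f \<in> C (k+j) \<longrightarrow> length gs = fst f \<longrightarrow> set gs \<subseteq> C (k+j)
            \<longrightarrow> (\<forall>g\<in>set gs. fst g = n) \<longrightarrow> ocomp f gs n \<in> C (k+j)"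
          using cl[of "k+j"] unfolding is_clone_def by blast
        have "ocomp f [g] 1 \<in> C (k+j)" using c3[rule_format, of f "[g]" 1] f g \<open>fst f = 1\<close> \<open>fst g = 1\<close> by simp
        moreover have "ocomp f [g] 1 \<in> S" using Scc f g unfolding comp_closed_def by auto
        ultimately show "ocomp f [g] 1 \<in> C (k + j) \<inter> S" by auto
      qed
    next
      fix j show "D j \<subset> S" unfolding D_def using nS by auto
    next
      show "(\<Union>j. D j) = S"
      proof
        show "(\<Union>j. D j) \<subseteq> S" unfolding D_def by auto
        show "S \<subseteq> (\<Union>j. D j)"
        proof
          fix s assume s: "s \<in> S"
          then have "s \<in> F" using SF unfolding arity_part_def by auto
          then obtain i where i: "s \<in> C i" using un by auto
          have "s \<in> C (k + i)" using m[of i "k+i"] i by auto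
          then show "s \<in> (\<Union>j. D j)" unfolding D_def using s by auto
        qed
      qed
    qed
    then have "\<exists>C :: nat \<Rightarrow> 'a operation set.
          (\<forall>k. C k \<subseteq> C (Suc k)) \<and> (\<forall>k. comp_closed (C k) \<and> C k \<subset> S) \<and> (\<Union>k. C k) = S"
      by (rule exI[where x=D])
    then show False using assms(3) unfolding semigroup_cf_uncountable_def by (rule notE[rotated])
  qed
  then obtain j where j: "S \<subseteq> C (k + j)" by blast
  have "N \<subseteq> C (k + j)" using k m[of k "k+j"] by auto
  then have "S \<union> N \<subseteq> C (k + j)" using j by blast
  then have "clone_gen (S \<union> N) \<subseteq> C (k + j)" using cl[of "k+j"] unfolding clone_gen_def by (intro Inter_lower) blast
  then show False using N(3) pr[of "k+j"] by auto
qed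

end
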